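(* For every $n\in\{1,\dots,N\}$, the limits $-\lim_{\rho\to\infty}\frac{\log P^{(b)}_n(\rho)}{\log\rho}$ and $-\lim_{\rho\to\infty}\frac{\log P^{c}_n(\rho)}{\log\rho}$ exist and both equal $n\,m_s K$ (i.e., the diversity order of the $n$-th user under NOMA is $nm_sK$ for both $b$-bit discrete, $b\ge2$, and continuous phase shifts).
   Context: Fix integers $N\ge1$, $K\ge1$, $b\ge2$ and a real $\beta\in(0,1]$. Let $m_G,m_g\ge 1/2$ with $m_G\neq m_g$; put $m_s=\min\{m_G,m_g\}$. For $n=1,\dots,N$ and $k=1,\dots,K$ let $G_k^n,g_k^n$ be mutually independent complex random variables such that $|G_k^n|$ has the Nakagami density $f(x)=\frac{2m^m}{\Gamma(m)}x^{2m-1}e^{-mx^2}$ ($x\ge0$) with $m=m_G$, and $|g_k^n|$ has this density with $m=m_g$. Let $\Delta=2\pi/2^b$. For each $n$ fix a constant $\tilde\theta_n\in[0,2\pi)$ and set $\bar\theta_k^n=\tilde\theta_n-\arg(G_k^ng_k^n)$, $\hat\theta_k^n=\Delta(\lfloor\bar\theta_k^n/\Delta\rfloor+\tfrac12)$, $\epsilon_k^n=\hat\theta_k^n-\bar\theta_k^n$. Define $Y^{(n)}=\beta\big|\sum_{k=1}^K|G_k^n||g_k^n|e^{j\epsilon_k^n}\big|$ and $Y_c^{(n)}=\beta\sum_{k=1}^K|G_k^n||g_k^n|$; let $Y_1\le\dots\le Y_N$ and $Y_{c,1}\le\dots\le Y_{c,N}$ be the respective order statistics. NOMA parameters: $\alpha_1>\dots>\alpha_N>0$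 with $\sum_n\alpha_n=1$; $\tilde\gamma_l=2^{\tilde R_l}-1$ with target rates $\tilde R_l>0$, and $\alpha_l-\tilde\gamma_l\sum_{i=l+1}^N\alpha_i>0$ for $1\le l\le N-1$; transmit SNR $\rho>0$. For $l\le n$ set $\tilde\rho_{n\leftarrow l}=\frac{\tilde\gamma_l}{\rho(\alpha_l-\tilde\gamma_l\sum_{i=l+1}^N\alpha_i)}$ if $(l,n)\neq(N,N)$ and $\tilde\rho_{N\leftarrow N}=\frac{\tilde\gamma_N}{\rho\alpha_N}$; $\tilde\rho_{n,\max}=\max_{1\le l\le n}\tilde\rho_{n\leftarrow l}$. Outage probabilities: $P^{(b)}_n(\rho)=\Pr(Y_n^2<\tilde\rho_{n,\max})$, $P^{c}_n(\rho)=\Pr(Y_{c,n}^2<\tilde\rho_{n,\max})$. *)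

theory Defs
  imports "HOL-Probability.Probability"
begin

definition nakagami_pdf :: "real \<Rightarrow> real \<Rightarrow> real" where
  "nakagami_pdf m x =
     (if 0 \<le> x then 2 * m powr m / Gamma m * x powr (2*m - 1) * exp (- m * x\<^sup>2) else 0)"

definition qstep :: "nat \<Rightarrow> real" where
  "qstep b = 2 * pi / 2 ^ b"

definition quant_err :: "nat \<Rightarrow> real \<Rightarrow> real" where
  "quant_err b th = qstep b * (real_of_int \<lfloor>th / qstep b\<rfloor> + 1/2) - th"

definition theta_bar :: "real \<Rightarrow> complex \<Rightarrow> complex \<Rightarrow> real" where
  "theta_bar tht Gv gv = tht - Arg (Gv * gv)"

definition Y_disc :: "nat \<Rightarrow> real \<Rightarrow> nat \<Rightarrow> (nat \<Rightarrow> real)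
     \<Rightarrow> (nat \<Rightarrow> nat \<Rightarrow> 'a \<Rightarrow> complex) \<Rightarrow> (nat \<Rightarrow> nat \<Rightarrow> 'a \<Rightarrow> complex) \<Rightarrow> nat \<Rightarrow> 'a \<Rightarrow> real" where
  "Y_disc b \<beta> K tht G g n \<omega> =
     \<beta> * cmod (\<Sum>k=1..K. complex_of_real (cmod (G n k \<omega>) * cmod (g n k \<omega>))
                 * cis (quant_err b (theta_bar (tht n) (G n k \<omega>) (g n k \<omega>))))"

definition Y_cont :: "real \<Rightarrow> nat
     \<Rightarrow> (nat \<Rightarrow> nat \<Rightarrow> 'a \<Rightarrow> complex) \<Rightarrow> (nat \<Rightarrow> nat \<Rightarrow> 'a \<Rightarrow> complex) \<Rightarrow> nat \<Rightarrow> 'a \<Rightarrow> real" where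
  "Y_cont \<beta> K G g n \<omega> = \<beta> * (\<Sum>k=1..K. cmod (G n k \<omega>) * cmod (g n k \<omega>))"

definition ord_stat :: "nat \<Rightarrow> (nat \<Rightarrow> 'a \<Rightarrow> real) \<Rightarrow> nat \<Rightarrow> 'a \<Rightarrow> real" where
  "ord_stat N Y n \<omega> = sort (map (\<lambda>i. Y i \<omega>) [1..<Suc N]) ! (n - 1)"

definition gam :: "(nat \<Rightarrow> real) \<Rightarrow> nat \<Rightarrow> real" where
  "gam R l = 2 powr (R l) - 1"

definition rho_nl :: "nat \<Rightarrow> (nat \<Rightarrow> real) \<Rightarrow> (nat \<Rightarrow> real) \<Rightarrow> real \<Rightarrow> nat \<Rightarrow> nat \<Rightarrow> real" where
  "rho_nl N alpha R \<rho> n l =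
     (if l = N \<and> n = N then gam R N / (\<rho> * alpha N)
      else gam R l / (\<rho> * (alpha l - gam R l * (\<Sum>i=l+1..N. alpha i))))"

definition rho_max :: "nat \<Rightarrow> (nat \<Rightarrow> real) \<Rightarrow> (nat \<Rightarrow> real) \<Rightarrow> real \<Rightarrow> nat \<Rightarrow> real" where
  "rho_max N alpha R \<rho> n = Max ((\<lambda>l. rho_nl N alpha R \<rho> n l) ` {1..n})"

definition outage :: "'a measure \<Rightarrow> nat \<Rightarrow> (nat \<Rightarrow> 'a \<Rightarrow> real) \<Rightarrow> real \<Rightarrow> nat \<Rightarrow> real" where
  "outage M N Y thr n = measure M {\<omega> \<in> space M. (ord_stat N Y n \<omega>)\<^sup>2 < thr}"

end

theory Submission
  imports Defs
begin


lemma powr_int_0: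
  fixes a c u :: real
  assumes "a > 0" "u \<ge> 0" "c \<ge> 0"
  shows "(\<integral>\<^sup>+x. ennreal (c * x powr (a - 1)) * indicator {0..u} x \<partial>lborel) = ennreal (c * (u powr a / a))"
proof -
  have "a - 1 > -1" using assms by simp
  from has_integral_powr_from_0[OF this assms(2)]
  have "((\<lambda>x. x powr (a - 1)) has_integral (u powr a / a)) {0..u}"
    by simp
  then have hi: "((\<lambda>x. c * x powr (a - 1)) has_integral c * (u powr a / a)) {0..u}"
    by (rule has_integral_mult_right)
  show ?thesis
    by (rule nn_integral_has_integral_lebesgue'[OF _ hi]) (use assms in simp)
qed
lemma nak_cdf_upper:
  assumes P: "prob_space M" and D: "distributed M lborel X (\<lambda>x. ennreal (nakagami_pdf m x))"
    and m: "m \<ge> 1/2" and u: "0 \<le> u"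
  shows "measure M {\<omega>\<in>space M. X \<omega> \<le> u} \<le> m powr m / Gamma m / m * u powr (2*m)"
proof -
  interpret prob_space M by fact
  define c where "c = 2 * m powr m / Gamma m"
  have c: "c \<ge> 0" unfolding c_def using m by (auto intro!: divide_nonneg_pos Gamma_real_pos)
  have "emeasure M (X -` {..u} \<inter> space M) = (\<integral>\<^sup>+x. ennreal (nakagami_pdf m x) * indicator {..u} x \<partial>lborel)"
    by (rule distributed_emeasure[OF D]) auto
  also have "\<dots> \<le> (\<integral>\<^sup>+x. ennreal (c * x powr (2*m - 1)) * indicator {0..u} x \<partial>lborel)"
  proof (intro nn_integral_mono)
    fix x :: real
    show "ennreal (nakagami_pdf m x) * indicator {..u} x \<le> ennreal (c * x powr (2*m - 1)) * indicator {0..u} x"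
    proof (cases "0 \<le> x \<and> x \<le> u")
      case True
      have 1: "c * x powr (2 * m - 1) * exp (- m * x\<^sup>2) \<le> c * x powr (2 * m - 1) * 1"
        using c m True by (intro mult_left_mono) auto
      have 2: "nakagami_pdf m x = c * x powr (2 * m - 1) * exp (- m * x\<^sup>2)"
        unfolding nakagami_pdf_def c_def using True by (simp only: if_True)
      have 3: "indicator {..u} x = (1::ennreal)" "indicator {0..u} x = (1::ennreal)" using True by auto
      show ?thesis unfolding 2 3 using 1 by (simp add: ennreal_leI)
    next
      case False
      then have "indicator {..u} x = (0::ennreal) \<or> nakagami_pdf m x = 0"
        unfolding nakagami_pdf_def by (auto simp: indicator_def)
      then show ?thesis by auto
    qed
  qed
  also have "\<dots> = ennreal (c * (u powr (2*m) / (2*m)))"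
    using powr_int_0[of "2*m" u c] m u c by simp
  finally have "emeasure M (X -` {..u} \<inter> space M) \<le> ennreal (c * (u powr (2*m) / (2*m)))" .
  moreover have "X -` {..u} \<inter> space M = {\<omega>\<in>space M. X \<omega> \<le> u}" by auto
  ultimately have "measure M {\<omega>\<in>space M. X \<omega> \<le> u} \<le> c * (u powr (2*m) / (2*m))"
    using c u m by (simp add: emeasure_eq_measure)
  also have "c * (u powr (2*m) / (2*m)) = m powr m / Gamma m / m * u powr (2*m)"
    unfolding c_def using m by simp
  finally show ?thesis .
qed

lemma nak_cdf_lower:
  assumes P: "prob_space M" and D: "distributed M lborel X (\<lambda>x. ennreal (nakagami_pdf m x))"
    and m: "m \<ge> 1/2" and u: "0 \<le> u" "u \<le> 1"
  shows "measure M {\<omega>\<in>space M. X \<omega> \<le> u} \<ge> m powr m / Gamma m / m * exp (-m) * u powr (2*m)"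
proof -
  interpret prob_space M by fact
  define c where "c = 2 * m powr m / Gamma m * exp (-m)"
  have c: "c \<ge> 0" unfolding c_def using m by (auto intro!: divide_nonneg_pos Gamma_real_pos)
  have "ennreal (c * (u powr (2*m) / (2*m))) = (\<integral>\<^sup>+x. ennreal (c * x powr (2*m - 1)) * indicator {0..u} x \<partial>lborel)"
    using powr_int_0[of "2*m" u c] m u c by simp
  also have "\<dots> \<le> (\<integral>\<^sup>+x. ennreal (nakagami_pdf m x) * indicator {..u} x \<partial>lborel)"
  proof (intro nn_integral_mono)
    fix x :: real
    show "ennreal (c * x powr (2*m - 1)) * indicator {0..u} x \<le> ennreal (nakagami_pdf m x) * indicator {..u} x"
    proof (cases "0 \<le> x \<and> x \<le> u")
      case True
      have "x\<^sup>2 \<le> 1" using True u by (simp add: power_le_one)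
      then have "exp (-m) \<le> exp (- m * x\<^sup>2)" using m by (simp add: mult_left_le)
      then have 1: "2 * m powr m / Gamma m * x powr (2 * m - 1) * exp (-m) \<le> 2 * m powr m / Gamma m * x powr (2 * m - 1) * exp (- m * x\<^sup>2)"
        using m by (intro mult_left_mono) (auto intro!: divide_nonneg_pos Gamma_real_pos)
      have 2: "nakagami_pdf m x = 2 * m powr m / Gamma m * x powr (2 * m - 1) * exp (- m * x\<^sup>2)"
        unfolding nakagami_pdf_def using True by (simp only: if_True)
      have 3: "indicator {..u} x = (1::ennreal)" "indicator {0..u} x = (1::ennreal)" using True by auto
      have 4: "c * x powr (2*m - 1) = 2 * m powr m / Gamma m * x powr (2 * m - 1) * exp (-m)"
        unfolding c_def by (simp only: ac_simps)
      show ?thesis unfolding 2 3 4 using 1 by (simp add: ennreal_leI)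
    next
      case False
      then have "indicator {0..u} x = (0::ennreal)" by (auto simp: indicator_def)
      then show ?thesis by auto
    qed
  qed
  also have "\<dots> = emeasure M (X -` {..u} \<inter> space M)"
    by (rule distributed_emeasure[OF D, symmetric]) auto
  finally have "ennreal (c * (u powr (2*m) / (2*m))) \<le> emeasure M (X -` {..u} \<inter> space M)" .
  moreover have "X -` {..u} \<inter> space M = {\<omega>\<in>space M. X \<omega> \<le> u}" by auto
  ultimately have "c * (u powr (2*m) / (2*m)) \<le> measure M {\<omega>\<in>space M. X \<omega> \<le> u}"
    using c u m by (simp add: emeasure_eq_measure)
  moreover have "c * (u powr (2*m) / (2*m)) = m powr m / Gamma m / m * exp (-m) * u powr (2*m)"
    unfolding c_def using m by simp
  ultimately show ?thesis by simp
qed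


lemma prod_upper:
  fixes X Y :: "'a \<Rightarrow> real"
  assumes P: "prob_space M" and ind: "prob_space.indep_var M borel Y borel X"
    and DX: "distributed M lborel X (\<lambda>x. ennreal (nakagami_pdf mx x))"
    and DY: "distributed M lborel Y (\<lambda>x. ennreal (nakagami_pdf my x))"
    and mx: "mx \<ge> 1/2" and my: "my > mx" and r: "r > 0"
  shows "measure M {\<omega>\<in>space M. X \<omega> * Y \<omega> \<le> r}
     \<le> mx powr mx / Gamma mx / mx * (2 * my powr my / Gamma my / (2*my - 2*mx) + 1) * r powr (2*mx)"
proof -
  interpret prob_space M by fact
  define cx where "cx = mx powr mx / Gamma mx / mx"
  define cY where "cY = 2 * my powr my / Gamma my"
  define fY where "fY = nakagami_pdf my"
  have cx: "cx \<ge> 0" unfolding cx_def using mx by (auto intro!: divide_nonneg_pos Gamma_real_pos)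
  have cY: "cY \<ge> 0" unfolding cY_def using mx my by (auto intro!: divide_nonneg_pos Gamma_real_pos)
  have fY: "fY y \<ge> 0" for y unfolding fY_def nakagami_pdf_def cY_def using mx my
    by (auto intro!: mult_nonneg_nonneg divide_nonneg_pos Gamma_real_pos)
  have rvY: "random_variable borel Y" and rvX: "random_variable borel X"
    using indep_var_rv1[OF ind] indep_var_rv2[OF ind] by auto
  note [measurable] = rvX rvY
  have fYm[measurable]: "fY \<in> borel_measurable borel"
    using distributed_real_measurable[OF _ DY[folded fY_def]] fY by simp
  define S where "S = {p::real\<times>real. snd p * fst p \<le> r}"
  have S: "S \<in> sets (borel \<Otimes>\<^sub>M borel)" unfolding S_def
  proof -
    have "{p \<in> space (borel \<Otimes>\<^sub>M borel). snd p * fst p \<le> (r::real)} \<in> sets (borel \<Otimes>\<^sub>M borel)"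
      by measurable
    then show "{p::real\<times>real. snd p * fst p \<le> r} \<in> sets (borel \<Otimes>\<^sub>M borel)" by (simp add: space_pair_measure)
  qed
  have eq: "distr M borel Y \<Otimes>\<^sub>M distr M borel X = distr M (borel \<Otimes>\<^sub>M borel) (\<lambda>x. (Y x, X x))"
    using ind indep_var_distribution_eq by blast
  interpret PX: prob_space "distr M borel X" by (rule prob_space_distr) simp
  have "emeasure M {\<omega>\<in>space M. X \<omega> * Y \<omega> \<le> r} = emeasure M ((\<lambda>x. (Y x, X x)) -` S \<inter> space M)"
    unfolding S_def by (intro arg_cong[where f="emeasure M"]) auto
  also have "\<dots> = emeasure (distr M (borel \<Otimes>\<^sub>M borel) (\<lambda>x. (Y x, X x))) S"
    using S by (intro emeasure_distr[symmetric]) auto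
  also have "\<dots> = emeasure (distr M borel Y \<Otimes>\<^sub>M distr M borel X) S" unfolding eq ..
  also have "\<dots> = (\<integral>\<^sup>+y. emeasure (distr M borel X) (Pair y -` S) \<partial>distr M borel Y)"
    using S by (intro PX.emeasure_pair_measure_alt) simp
  also have "\<dots> \<le> (\<integral>\<^sup>+y. (if y > 0 then ennreal (cx * r powr (2*mx) * y powr (-2*mx)) else 1) \<partial>distr M borel Y)"
  proof (intro nn_integral_mono)
    fix y :: real
    show "emeasure (distr M borel X) (Pair y -` S) \<le> (if y > 0 then ennreal (cx * r powr (2*mx) * y powr (-2*mx)) else 1)"
    proof (cases "y > 0")
      case True
      have "Pair y -` S = {..r/y}" unfolding S_def using True by (auto simp: field_simps)
      then have "emeasure (distr M borel X) (Pair y -` S) = emeasure M {\<omega>\<in>space M. X \<omega> \<le> r/y}"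
        by (simp add: emeasure_distr vimage_def Int_def conj_commute)
      also have "\<dots> = ennreal (measure M {\<omega>\<in>space M. X \<omega> \<le> r/y})" by (simp add: emeasure_eq_measure)
      also have "\<dots> \<le> ennreal (cx * (r/y) powr (2*mx))"
        using nak_cdf_upper[OF P DX mx, of "r/y"] True r unfolding cx_def by (intro ennreal_leI) simp
      also have "cx * (r/y) powr (2*mx) = cx * r powr (2*mx) * y powr (-2*mx)"
        using True r by (simp add: powr_divide powr_minus_divide)
      finally show ?thesis using True by simp
    next
      case False
      then show ?thesis using PX.emeasure_le_1 by simp
    qed
  qed
  also have "\<dots> = (\<integral>\<^sup>+\<omega>. (if Y \<omega> > 0 then ennreal (cx * r powr (2*mx) * Y \<omega> powr (-2*mx)) else 1) \<partial>M)"
    by (intro nn_integral_distr) auto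
  also have "\<dots> = (\<integral>\<^sup>+y. ennreal (fY y) * (if y > 0 then ennreal (cx * r powr (2*mx) * y powr (-2*mx)) else 1) \<partial>lborel)"
    by (rule distributed_nn_integral[OF DY[folded fY_def], symmetric]) simp
  also have "\<dots> \<le> (\<integral>\<^sup>+y. ennreal (cx * r powr (2*mx)) * (ennreal (cY * y powr (2*(my - mx) - 1)) * indicator {0..1} y + ennreal (fY y)) \<partial>lborel)"
  proof (intro nn_integral_mono)
    fix y :: real
    show "ennreal (fY y) * (if y > 0 then ennreal (cx * r powr (2*mx) * y powr (-2*mx)) else 1)
      \<le> ennreal (cx * r powr (2*mx)) * (ennreal (cY * y powr (2*(my - mx) - 1)) * indicator {0..1} y + ennreal (fY y))"
    proof (cases "y > 0")
      case False
      then have "fY y = 0" unfolding fY_def nakagami_pdf_def by auto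
      then show ?thesis by simp
    next
      case True
      define K where "K = cx * r powr (2*mx)"
      have K: "K \<ge> 0" unfolding K_def using cx by simp
      have fYe: "fY y = cY * y powr (2*my - 1) * exp (- my * y\<^sup>2)"
        unfolding fY_def nakagami_pdf_def cY_def using True by simp
      have fYle: "fY y \<le> cY * y powr (2*my - 1)"
        unfolding fYe using cY True mx my by (intro mult_left_le) auto
      have "fY y * (K * y powr (-2*mx)) \<le> K * (cY * y powr (2*(my - mx) - 1) * indicator {0..1} y + fY y)"
      proof (cases "y \<le> 1")
        case True2: True
        have "fY y * (K * y powr (-2*mx)) \<le> cY * y powr (2*my - 1) * (K * y powr (-2*mx))"
          using fYle K by (intro mult_right_mono) auto
        also have "\<dots> = K * (cY * (y powr (2*my - 1) * y powr (-2*mx)))" by (simp add: mult_ac)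
        also have "y powr (2*my - 1) * y powr (-2*mx) = y powr (2*(my - mx) - 1)"
          using True by (simp add: powr_add[symmetric] algebra_simps)
        also have "K * (cY * y powr (2*(my - mx) - 1)) \<le> K * (cY * y powr (2*(my - mx) - 1) * indicator {0..1} y + fY y)"
          using True True2 K fY by (intro mult_left_mono) (auto simp: indicator_def)
        finally show ?thesis .
      next
        case False
        have "y powr (-2*mx) \<le> y powr 0" using False mx by (intro powr_mono) auto
        then have "y powr (-2*mx) \<le> 1" using True by simp
        then have "fY y * (K * y powr (-2*mx)) \<le> fY y * (K * 1)"
          using fY K by (intro mult_left_mono) auto
        also have "\<dots> \<le> K * (cY * y powr (2*(my - mx) - 1) * indicator {0..1} y + fY y)"
          using False K by (simp add: indicator_def)
        finally show ?thesis .
      qed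
      then have "ennreal (fY y * (K * y powr (-2*mx))) \<le> ennreal (K * (cY * y powr (2*(my - mx) - 1) * indicator {0..1} y + fY y))"
        by (rule ennreal_leI)
      moreover have "ennreal (fY y * (K * y powr (-2*mx))) = ennreal (fY y) * ennreal (K * y powr (-2*mx))"
        using fY K by (simp add: ennreal_mult)
      moreover have "ennreal (K * (cY * y powr (2*(my - mx) - 1) * indicator {0..1} y + fY y)) =
          ennreal K * (ennreal (cY * y powr (2*(my - mx) - 1)) * indicator {0..1} y + ennreal (fY y))"
        using fY K cY by (simp add: ennreal_mult ennreal_plus indicator_def)
      ultimately show ?thesis using True unfolding K_def by simp
    qed
  qed
  also have "\<dots> = ennreal (cx * r powr (2*mx)) * ((\<integral>\<^sup>+y. ennreal (cY * y powr (2*(my - mx) - 1)) * indicator {0..1} y \<partial>lborel) + (\<integral>\<^sup>+y. ennreal (fY y) \<partial>lborel))"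
  proof -
    have m1: "(\<lambda>y. ennreal (cY * y powr (2*(my - mx) - 1)) * indicator {0..1} y) \<in> borel_measurable lborel"
      by measurable
    have m2: "(\<lambda>y. ennreal (fY y)) \<in> borel_measurable lborel" by measurable
    have "(\<integral>\<^sup>+y. ennreal (cx * r powr (2*mx)) * (ennreal (cY * y powr (2*(my - mx) - 1)) * indicator {0..1} y + ennreal (fY y)) \<partial>lborel)
      = ennreal (cx * r powr (2*mx)) * (\<integral>\<^sup>+y. (ennreal (cY * y powr (2*(my - mx) - 1)) * indicator {0..1} y + ennreal (fY y)) \<partial>lborel)"
      using m1 m2 by (intro nn_integral_cmult) auto
    also have "(\<integral>\<^sup>+y. (ennreal (cY * y powr (2*(my - mx) - 1)) * indicator {0..1} y + ennreal (fY y)) \<partial>lborel)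
      = (\<integral>\<^sup>+y. ennreal (cY * y powr (2*(my - mx) - 1)) * indicator {0..1} y \<partial>lborel) + (\<integral>\<^sup>+y. ennreal (fY y) \<partial>lborel)"
      using m1 m2 by (intro nn_integral_add) auto
    finally show ?thesis .
  qed
  also have "(\<integral>\<^sup>+y. ennreal (fY y) \<partial>lborel) = 1"
  proof -
    have "emeasure M (Y -` UNIV \<inter> space M) = (\<integral>\<^sup>+y. ennreal (fY y) * indicator UNIV y \<partial>lborel)"
      by (rule distributed_emeasure[OF DY[folded fY_def]]) simp
    then show ?thesis by (simp add: emeasure_space_1)
  qed
  also have "(\<integral>\<^sup>+y. ennreal (cY * y powr (2*(my - mx) - 1)) * indicator {0..1} y \<partial>lborel) = ennreal (cY * (1 powr (2*(my-mx)) / (2*(my-mx))))"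
    using powr_int_0[of "2*(my-mx)" 1 cY] my cY by simp
  also have "ennreal (cx * r powr (2*mx)) * (ennreal (cY * (1 powr (2*(my-mx)) / (2*(my-mx)))) + 1)
     = ennreal (cx * r powr (2*mx) * (cY / (2*my - 2*mx) + 1))"
  proof -
    have "cY * (1 powr (2*(my-mx)) / (2*(my-mx))) = cY / (2*my - 2*mx)" by (simp add: algebra_simps)
    moreover have "cY / (2*my - 2*mx) \<ge> 0" using cY my by simp
    ultimately show ?thesis using cx cY by (simp add: ennreal_mult ennreal_plus)
  qed
  finally have "ennreal (measure M {\<omega>\<in>space M. X \<omega> * Y \<omega> \<le> r}) \<le> ennreal (cx * r powr (2*mx) * (cY / (2*my - 2*mx) + 1))"
    by (simp add: emeasure_eq_measure)
  moreover have "cx * r powr (2*mx) * (cY / (2*my - 2*mx) + 1) \<ge> 0" using cx cY my by simp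
  ultimately have "measure M {\<omega>\<in>space M. X \<omega> * Y \<omega> \<le> r} \<le> cx * r powr (2*mx) * (cY / (2*my - 2*mx) + 1)"
    by (simp add: ennreal_le_iff)
  then show ?thesis unfolding cx_def cY_def by (simp add: mult_ac)
qed


lemma Arg_measurable[measurable]: "Arg \<in> borel_measurable borel"
proof -
  define A where "A = - (\<real>\<^sub>\<le>\<^sub>0 :: complex set)"
  have Ao: "open A" unfolding A_def by (simp add: closed_nonpos_Reals_complex open_Compl)
  have f: "(\<lambda>z. if z \<in> A then Arg z else pi) \<in> borel_measurable borel"
    by (rule borel_measurable_continuous_on_if) (use Ao in \<open>auto simp: A_def intro: continuous_on_Arg continuous_on_const\<close>)
  have eq: "Arg = (\<lambda>z. if z = 0 then 0 else (if z \<in> A then Arg z else pi))"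
  proof
    fix z :: complex
    show "Arg z = (if z = 0 then 0 else (if z \<in> A then Arg z else pi))"
    proof (cases "z = 0 \<or> z \<in> A")
      case False
      then have "z \<in> \<real>" "Re z < 0" unfolding A_def by (auto simp: complex_nonpos_Reals_iff complex_is_Real_iff complex_eq_iff)
      then show ?thesis using False by (simp add: Arg_real)
    qed (auto simp: Arg_zero)
  qed
  show ?thesis by (subst eq) (use f in measurable)
qed

lemma quant_err_measurable[measurable]: "quant_err b \<in> borel_measurable borel"
  unfolding quant_err_def by measurable

lemma theta_bar_measurable[measurable]:
  "(\<lambda>p. theta_bar t (fst p) (snd p)) \<in> borel_measurable (borel \<Otimes>\<^sub>M borel)"
  unfolding theta_bar_def by measurable


lemma sorted_nth_less_iff:
  fixes ys :: "real list"
  assumes s: "sorted ys" and j: "j < length ys"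
  shows "ys ! j < c \<longleftrightarrow> Suc j \<le> card {i. i < length ys \<and> ys ! i < c}"
proof
  assume a: "ys ! j < c"
  have "{..j} \<subseteq> {i. i < length ys \<and> ys ! i < c}"
  proof
    fix i assume "i \<in> {..j}"
    then have "ys ! i \<le> ys ! j" using s j by (intro sorted_nth_mono) auto
    then show "i \<in> {i. i < length ys \<and> ys ! i < c}" using a j \<open>i \<in> {..j}\<close> by auto
  qed
  then have "card {..j} \<le> card {i. i < length ys \<and> ys ! i < c}" by (intro card_mono) auto
  then show "Suc j \<le> card {i. i < length ys \<and> ys ! i < c}" by simp
next
  assume a: "Suc j \<le> card {i. i < length ys \<and> ys ! i < c}"
  show "ys ! j < c"
  proof (rule ccontr)
    assume "\<not> ys ! j < c"
    then have "{i. i < length ys \<and> ys ! i < c} \<subseteq> {..<j}"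
    proof (intro subsetI)
      fix i assume i: "i \<in> {i. i < length ys \<and> ys ! i < c}"
      show "i \<in> {..<j}"
      proof (rule ccontr)
        assume "i \<notin> {..<j}"
        then have "ys ! j \<le> ys ! i" using s i by (intro sorted_nth_mono) auto
        then show False using i \<open>\<not> ys ! j < c\<close> by auto
      qed
    qed
    then have "card {i. i < length ys \<and> ys ! i < c} \<le> card {..<j}" by (intro card_mono) auto
    then show False using a by simp
  qed
qed

lemma ord_stat_less_iff:
  assumes n: "n \<in> {1..N}"
  shows "ord_stat N Y n \<omega> < c \<longleftrightarrow> n \<le> card {i\<in>{1..N}. Y i \<omega> < c}"
proof -
  define xs where "xs = map (\<lambda>i. Y i \<omega>) [1..<Suc N]"
  have len: "length (sort xs) = N" unfolding xs_def by simp
  have "ord_stat N Y n \<omega> < c \<longleftrightarrow> Suc (n - 1) \<le> card {i. i < length (sort xs) \<and> sort xs ! i < c}"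
    unfolding ord_stat_def xs_def[symmetric] using n len by (intro sorted_nth_less_iff) auto
  also have "card {i. i < length (sort xs) \<and> sort xs ! i < c} = length (filter (\<lambda>x. x < c) (sort xs))"
    by (rule length_filter_conv_card[symmetric])
  also have "\<dots> = length (filter (\<lambda>x. x < c) xs)"
    by (metis mset_filter mset_sort size_mset)
  also have "\<dots> = length (filter (\<lambda>i. Y i \<omega> < c) [1..<Suc N])"
    unfolding xs_def by (simp add: filter_map comp_def)
  also have "\<dots> = card {i\<in>{1..N}. Y i \<omega> < c}"
    by (subst distinct_card[symmetric]) (auto intro!: arg_cong[where f=card])
  finally show ?thesis using n by simp
qed

lemma ord_stat_sq_less_iff:
  assumes n: "n \<in> {1..N}" and nn: "\<And>i. i \<in> {1..N} \<Longrightarrow> Y i \<omega> \<ge> 0" and t: "t > 0"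
  shows "(ord_stat N Y n \<omega>)\<^sup>2 < t \<longleftrightarrow> n \<le> card {i\<in>{1..N}. Y i \<omega> < sqrt t}"
proof -
  define xs where "xs = map (\<lambda>i. Y i \<omega>) [1..<Suc N]"
  have "ord_stat N Y n \<omega> \<in> set (sort xs)"
    unfolding ord_stat_def xs_def[symmetric] using n by (intro nth_mem) (auto simp: xs_def)
  then have "ord_stat N Y n \<omega> \<ge> 0" using nn by (auto simp: xs_def)
  then have "(ord_stat N Y n \<omega>)\<^sup>2 < t \<longleftrightarrow> ord_stat N Y n \<omega> < sqrt t"
    using t by (metis real_less_rsqrt real_sqrt_less_iff real_sqrt_pow2_iff abs_of_nonneg real_sqrt_abs less_imp_le real_less_lsqrt)
  then show ?thesis using ord_stat_less_iff[OF n] by simp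
qed

lemma card_mono_pred:
  assumes "\<And>i. i \<in> A \<Longrightarrow> P i \<Longrightarrow> Q i" "finite A"
  shows "card {i\<in>A. P i} \<le> card {i\<in>A. Q i}"
  using assms by (intro card_mono) auto

lemma count_pred_measurable:
  fixes Y :: "nat \<Rightarrow> 'a \<Rightarrow> real"
  assumes [measurable]: "\<And>i. i \<in> {1..N} \<Longrightarrow> Y i \<in> borel_measurable M"
  shows "{\<omega>\<in>space M. n \<le> card {i\<in>{1..N}. Y i \<omega> < s}} \<in> sets M"
proof -
  have eq: "real (card {i\<in>{1..N}. Y i \<omega> < s}) = (\<Sum>i\<in>{1..N}. if Y i \<omega> < s then 1 else 0)" for \<omega>
    by (simp add: sum.If_cases Int_def conj_commute)
  have "(\<lambda>\<omega>. \<Sum>i\<in>{1..N}. if Y i \<omega> < s then (1::real) else 0) \<in> borel_measurable M"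
    by (intro borel_measurable_sum) auto
  then have "{\<omega>\<in>space M. real n \<le> (\<Sum>i\<in>{1..N}. if Y i \<omega> < s then (1::real) else 0)} \<in> sets M"
    by measurable
  then show ?thesis by (simp add: eq[symmetric])
qed


lemma quant_err_bound: "\<bar>quant_err b th\<bar> \<le> qstep b / 2"
proof -
  have q: "qstep b > 0" unfolding qstep_def by simp
  define f where "f = real_of_int \<lfloor>th / qstep b\<rfloor>"
  have "f \<le> th / qstep b" "th / qstep b < f + 1" unfolding f_def by linarith+
  then have "qstep b * f \<le> th" "th < qstep b * (f + 1)" using q by (auto simp: field_simps)
  then show ?thesis unfolding quant_err_def f_def[symmetric] by (auto simp: algebra_simps abs_if)
qed

lemma qstep_le: "b \<ge> 2 \<Longrightarrow> qstep b \<le> pi / 2"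
proof -
  assume "b \<ge> 2"
  then have "(2::real) ^ 2 \<le> 2 ^ b" by (intro power_increasing) auto
  then show ?thesis unfolding qstep_def using pi_gt_zero by (simp add: field_simps)
qed

lemma Y_disc_le_cont:
  assumes "\<beta> \<ge> 0"
  shows "Y_disc b \<beta> K tht G g n \<omega> \<le> Y_cont \<beta> K G g n \<omega>"
proof -
  have "cmod (\<Sum>k=1..K. complex_of_real (cmod (G n k \<omega>) * cmod (g n k \<omega>))
                 * cis (quant_err b (theta_bar (tht n) (G n k \<omega>) (g n k \<omega>))))
     \<le> (\<Sum>k=1..K. cmod (complex_of_real (cmod (G n k \<omega>) * cmod (g n k \<omega>))
                 * cis (quant_err b (theta_bar (tht n) (G n k \<omega>) (g n k \<omega>)))))"
    by (rule norm_sum)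
  also have "\<dots> = (\<Sum>k=1..K. cmod (G n k \<omega>) * cmod (g n k \<omega>))"
    by (simp add: norm_mult)
  finally show ?thesis unfolding Y_disc_def Y_cont_def using assms by (intro mult_left_mono) auto
qed

lemma Y_disc_ge_cont:
  assumes "\<beta> \<ge> 0" "b \<ge> 2"
  shows "cos (qstep b / 2) * Y_cont \<beta> K G g n \<omega> \<le> Y_disc b \<beta> K tht G g n \<omega>"
proof -
  define e where "e = (\<lambda>k. quant_err b (theta_bar (tht n) (G n k \<omega>) (g n k \<omega>)))"
  define r where "r = (\<lambda>k. cmod (G n k \<omega>) * cmod (g n k \<omega>))"
  have ce: "cos (qstep b / 2) \<le> cos (e k)" for k
  proof -
    have pp: "pi / 2^b \<le> pi / 1" by (intro divide_left_mono) auto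
    have "cos (qstep b / 2) \<le> cos \<bar>e k\<bar>"
      using pp quant_err_bound[of b] qstep_le[OF assms(2)] unfolding e_def
      by (intro cos_monotone_0_pi_le) (auto simp: qstep_def)
    then show ?thesis by simp
  qed
  have "cos (qstep b / 2) * (\<Sum>k=1..K. r k) = (\<Sum>k=1..K. cos (qstep b / 2) * r k)"
    by (simp add: sum_distrib_left)
  also have "\<dots> \<le> (\<Sum>k=1..K. r k * cos (e k))"
    using ce by (intro sum_mono) (simp add: r_def mult.commute[of _ "cos _"] mult_right_mono)
  also have "\<dots> = Re (\<Sum>k=1..K. complex_of_real (r k) * cis (e k))"
    by (simp add: Re_sum)
  also have "\<dots> \<le> cmod (\<Sum>k=1..K. complex_of_real (r k) * cis (e k))"
    by (rule complex_Re_le_cmod)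
  finally have "cos (qstep b / 2) * (\<Sum>k=1..K. r k) \<le> cmod (\<Sum>k=1..K. complex_of_real (r k) * cis (e k))" .
  then have "\<beta> * (cos (qstep b / 2) * (\<Sum>k=1..K. r k)) \<le> \<beta> * cmod (\<Sum>k=1..K. complex_of_real (r k) * cis (e k))"
    using assms by (intro mult_left_mono) auto
  then show ?thesis unfolding Y_disc_def Y_cont_def e_def r_def by (simp add: mult_ac)
qed

lemma Y_cont_nonneg: "\<beta> \<ge> 0 \<Longrightarrow> Y_cont \<beta> K G g n \<omega> \<ge> 0"
  unfolding Y_cont_def by (auto intro!: sum_nonneg mult_nonneg_nonneg)

lemma Y_disc_nonneg: "\<beta> \<ge> 0 \<Longrightarrow> Y_disc b \<beta> K tht G g n \<omega> \<ge> 0"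
  unfolding Y_disc_def by auto

lemma cis_meas[measurable]: "cis \<in> borel_measurable borel"
proof -
  have "continuous_on UNIV cis" unfolding cis_conv_exp by (intro continuous_intros)
  then show ?thesis by (rule borel_measurable_continuous_onI)
qed

lemma Y_cont_meas:
  assumes "\<And>k. k \<in> {1..K} \<Longrightarrow> G n k \<in> borel_measurable M" "\<And>k. k \<in> {1..K} \<Longrightarrow> g n k \<in> borel_measurable M"
  shows "Y_cont \<beta> K G g n \<in> borel_measurable M"
  unfolding Y_cont_def using assms by measurable

lemma Y_disc_meas:
  assumes "\<And>k. k \<in> {1..K} \<Longrightarrow> G n k \<in> borel_measurable M" "\<And>k. k \<in> {1..K} \<Longrightarrow> g n k \<in> borel_measurable M"
  shows "Y_disc b \<beta> K tht G g n \<in> borel_measurable M"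
  unfolding Y_disc_def theta_bar_def using assms by measurable


locale nsetup =
  fixes M :: "'a measure" and N K :: nat and \<beta> mG mg :: real
    and G g :: "nat \<Rightarrow> nat \<Rightarrow> 'a \<Rightarrow> complex"
  assumes M: "prob_space M"
    and N: "N \<ge> 1" and K: "K \<ge> 1"
    and beta: "0 < \<beta>"
    and mG: "mG \<ge> 1/2" and mg: "mg \<ge> 1/2" and mGg: "mG \<noteq> mg"
    and indep: "prob_space.indep_vars M (\<lambda>_. borel)
                  (\<lambda>(i, k, c). if c then G i k else g i k) ({1..N} \<times> {1..K} \<times> UNIV)"
    and distG: "\<And>i k. i \<in> {1..N} \<Longrightarrow> k \<in> {1..K} \<Longrightarrow>
                  distributed M lborel (\<lambda>\<omega>. cmod (G i k \<omega>)) (\<lambda>x. ennreal (nakagami_pdf mG x))"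
    and distg: "\<And>i k. i \<in> {1..N} \<Longrightarrow> k \<in> {1..K} \<Longrightarrow>
                  distributed M lborel (\<lambda>\<omega>. cmod (g i k \<omega>)) (\<lambda>x. ennreal (nakagami_pdf mg x))"
begin

interpretation P: prob_space M by (rule M)

definition "X = (\<lambda>(i, k, c). if c then G i k else g i k)"

lemma Gm[measurable]: "i \<in> {1..N} \<Longrightarrow> k \<in> {1..K} \<Longrightarrow> G i k \<in> borel_measurable M"
proof -
  assume "i \<in> {1..N}" "k \<in> {1..K}"
  then have "\<forall>y. P.random_variable borel (if y then G i k else g i k)"
    using indep unfolding P.indep_vars_def by auto
  from spec[OF this, of True] show ?thesis by simp
qed

lemma gm[measurable]: "i \<in> {1..N} \<Longrightarrow> k \<in> {1..K} \<Longrightarrow> g i k \<in> borel_measurable M"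
proof -
  assume "i \<in> {1..N}" "k \<in> {1..K}"
  then have "\<forall>y. P.random_variable borel (if y then G i k else g i k)"
    using indep unfolding P.indep_vars_def by auto
  from spec[OF this, of False] show ?thesis by simp
qed

definition "Z i k \<omega> = cmod (G i k \<omega>) * cmod (g i k \<omega>)"

lemma indepZ: "P.indep_vars (\<lambda>_. borel) (\<lambda>j. Z (fst j) (snd j)) ({1..N} \<times> {1..K})"
proof -
  define Kf where "Kf = (\<lambda>j::nat\<times>nat. {(fst j, snd j, True), (fst j, snd j, False)})"
  have r: "P.indep_vars (\<lambda>j. PiM (Kf j) (\<lambda>_. borel)) (\<lambda>j \<omega>. restrict (\<lambda>x. X x \<omega>) (Kf j)) ({1..N} \<times> {1..K})"
    using indep[folded X_def]
    by (rule P.indep_vars_restrict) (auto simp: Kf_def disjoint_family_on_def)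
  have c: "P.indep_vars (\<lambda>_. borel) (\<lambda>j \<omega>. (\<lambda>f. cmod (f (fst j, snd j, True)) * cmod (f (fst j, snd j, False)))
      (restrict (\<lambda>x. X x \<omega>) (Kf j))) ({1..N} \<times> {1..K})"
  proof (rule P.indep_vars_compose2[OF r])
    fix j :: "nat \<times> nat" assume "j \<in> {1..N} \<times> {1..K}"
    have 1: "(\<lambda>f. f (fst j, snd j, True)) \<in> measurable (PiM (Kf j) (\<lambda>_. borel)) (borel :: complex measure)"
      by (rule measurable_component_singleton) (simp add: Kf_def)
    have 2: "(\<lambda>f. f (fst j, snd j, False)) \<in> measurable (PiM (Kf j) (\<lambda>_. borel)) (borel :: complex measure)"
      by (rule measurable_component_singleton) (simp add: Kf_def)
    show "(\<lambda>f. cmod (f (fst j, snd j, True)) * cmod (f (fst j, snd j, False))) \<in> borel_measurable (PiM (Kf j) (\<lambda>_. borel))"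
      using 1 2 by measurable
  qed
  show ?thesis
    by (rule P.indep_vars_cong[THEN iffD1, OF _ _ _ c]) (auto simp: Kf_def X_def Z_def fun_eq_iff)
qed

lemma pair_indep:
  assumes "i \<in> {1..N}" "k \<in> {1..K}"
  shows "P.indep_var borel (\<lambda>\<omega>. cmod (G i k \<omega>)) borel (\<lambda>\<omega>. cmod (g i k \<omega>))"
    and "P.indep_var borel (\<lambda>\<omega>. cmod (g i k \<omega>)) borel (\<lambda>\<omega>. cmod (G i k \<omega>))"
proof -
  have cm: "(\<lambda>f. cmod (f j)) \<in> borel_measurable (PiM {j} (\<lambda>_. (borel :: complex measure)))" for j :: "nat\<times>nat\<times>bool"
  proof -
    have "(\<lambda>f. f j) \<in> measurable (PiM {j} (\<lambda>_. borel)) (borel :: complex measure)"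
      by (rule measurable_component_singleton) simp
    then show ?thesis by measurable
  qed
  have a: "P.indep_var (PiM {(i,k,True)} (\<lambda>_. borel)) (\<lambda>\<omega>. restrict (\<lambda>x. X x \<omega>) {(i,k,True)})
      (PiM {(i,k,False)} (\<lambda>_. borel)) (\<lambda>\<omega>. restrict (\<lambda>x. X x \<omega>) {(i,k,False)})"
    using assms by (intro P.indep_var_restrict[OF indep[folded X_def]]) auto
  from P.indep_var_compose[OF a cm cm]
  show "P.indep_var borel (\<lambda>\<omega>. cmod (G i k \<omega>)) borel (\<lambda>\<omega>. cmod (g i k \<omega>))"
    by (simp add: comp_def X_def)
  have b: "P.indep_var (PiM {(i,k,False)} (\<lambda>_. borel)) (\<lambda>\<omega>. restrict (\<lambda>x. X x \<omega>) {(i,k,False)})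
      (PiM {(i,k,True)} (\<lambda>_. borel)) (\<lambda>\<omega>. restrict (\<lambda>x. X x \<omega>) {(i,k,True)})"
    using assms by (intro P.indep_var_restrict[OF indep[folded X_def]]) auto
  from P.indep_var_compose[OF b cm cm]
  show "P.indep_var borel (\<lambda>\<omega>. cmod (g i k \<omega>)) borel (\<lambda>\<omega>. cmod (G i k \<omega>))"
    by (simp add: comp_def X_def)
qed

end


context nsetup begin

interpretation P: prob_space M by (rule M)

definition "ms = min mG mg"
definition "CZ = (if mG < mg then mG powr mG / Gamma mG / mG * (2 * mg powr mg / Gamma mg / (2*mg - 2*mG) + 1)
                 else mg powr mg / Gamma mg / mg * (2 * mG powr mG / Gamma mG / (2*mG - 2*mg) + 1))"

lemma ms_pos: "ms \<ge> 1/2" unfolding ms_def using mG mg by simp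

lemma Z_upper:
  assumes "i \<in> {1..N}" "k \<in> {1..K}" "r > 0"
  shows "measure M {\<omega>\<in>space M. Z i k \<omega> \<le> r} \<le> CZ * r powr (2*ms)"
proof (cases "mG < mg")
  case True
  have "measure M {\<omega>\<in>space M. cmod (G i k \<omega>) * cmod (g i k \<omega>) \<le> r}
     \<le> mG powr mG / Gamma mG / mG * (2 * mg powr mg / Gamma mg / (2*mg - 2*mG) + 1) * r powr (2*mG)"
    by (rule prod_upper[OF M pair_indep(2)[OF assms(1,2)] distG[OF assms(1,2)] distg[OF assms(1,2)] mG True assms(3)])
  then show ?thesis using True unfolding CZ_def ms_def Z_def by simp
next
  case False
  then have lt: "mg < mG" using mGg by simp
  have "measure M {\<omega>\<in>space M. cmod (g i k \<omega>) * cmod (G i k \<omega>) \<le> r}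
     \<le> mg powr mg / Gamma mg / mg * (2 * mG powr mG / Gamma mG / (2*mG - 2*mg) + 1) * r powr (2*mg)"
    by (rule prod_upper[OF M pair_indep(1)[OF assms(1,2)] distg[OF assms(1,2)] distG[OF assms(1,2)] mg lt assms(3)])
  then show ?thesis using False lt unfolding CZ_def ms_def Z_def by (simp add: mult.commute)
qed

definition "cG = mG powr mG / Gamma mG / mG * exp (-mG)"
definition "cg = mg powr mg / Gamma mg / mg * exp (-mg)"
definition "CL = cG * cg"
definition "uG w = (if mG < mg then w else 1)"
definition "ug w = (if mG < mg then 1 else w)"

lemma cG_pos: "cG > 0" unfolding cG_def using mG by (auto intro!: divide_pos_pos Gamma_real_pos)
lemma cg_pos: "cg > 0" unfolding cg_def using mg by (auto intro!: divide_pos_pos Gamma_real_pos)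
lemma CL_pos: "CL > 0" unfolding CL_def using cG_pos cg_pos by simp

lemma pair_lower:
  assumes "i \<in> {1..N}" "k \<in> {1..K}" "0 \<le> w" "w \<le> 1"
  shows "measure M {\<omega>\<in>space M. cmod (G i k \<omega>) \<le> uG w} * measure M {\<omega>\<in>space M. cmod (g i k \<omega>) \<le> ug w}
     \<ge> CL * w powr (2*ms)"
proof -
  have lG: "measure M {\<omega>\<in>space M. cmod (G i k \<omega>) \<le> u} \<ge> cG * u powr (2*mG)" if "0 \<le> u" "u \<le> 1" for u
    using nak_cdf_lower[OF M distG[OF assms(1,2)] mG that] unfolding cG_def by simp
  have lg: "measure M {\<omega>\<in>space M. cmod (g i k \<omega>) \<le> u} \<ge> cg * u powr (2*mg)" if "0 \<le> u" "u \<le> 1" for u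
    using nak_cdf_lower[OF M distg[OF assms(1,2)] mg that] unfolding cg_def by simp
  show ?thesis
  proof (cases "mG < mg")
    case True
    have "cG * w powr (2*mG) * (cg * 1 powr (2*mg)) \<le> measure M {\<omega>\<in>space M. cmod (G i k \<omega>) \<le> w} * measure M {\<omega>\<in>space M. cmod (g i k \<omega>) \<le> 1}"
      using lG[of w] lg[of 1] assms cG_pos cg_pos by (intro mult_mono) auto
    then show ?thesis using True unfolding uG_def ug_def CL_def ms_def by (simp add: mult_ac)
  next
    case False
    have "cG * 1 powr (2*mG) * (cg * w powr (2*mg)) \<le> measure M {\<omega>\<in>space M. cmod (G i k \<omega>) \<le> 1} * measure M {\<omega>\<in>space M. cmod (g i k \<omega>) \<le> w}"
      using lG[of 1] lg[of w] assms cG_pos cg_pos by (intro mult_mono) auto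
    then show ?thesis using False mGg unfolding uG_def ug_def CL_def ms_def by (simp add: mult_ac)
  qed
qed

end


context nsetup begin

interpretation P: prob_space M by (rule M)

lemma Zm[measurable]: "i \<in> {1..N} \<Longrightarrow> k \<in> {1..K} \<Longrightarrow> Z i k \<in> borel_measurable M"
  unfolding Z_def by measurable

lemma Z_nonneg: "Z i k \<omega> \<ge> 0" unfolding Z_def by simp

lemma E_upper:
  assumes n: "n \<in> {1..N}" and s: "s > 0"
  shows "measure M {\<omega>\<in>space M. n \<le> card {i\<in>{1..N}. Y_cont \<beta> K G g i \<omega> < s}}
    \<le> real (card {S. S \<subseteq> {1..N} \<and> card S = n}) * (CZ * (s/\<beta>) powr (2*ms)) ^ (n*K)"
proof -
  define SS where "SS = {S. S \<subseteq> {1..N} \<and> card S = n}"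
  define A where "A = (\<lambda>S. \<Inter>j\<in>S\<times>{1..K}. (\<lambda>j. Z (fst j) (snd j)) j -` {..s/\<beta>} \<inter> space M)"
  have finSS: "finite SS" unfolding SS_def by (rule finite_subset[of _ "Pow {1..N}"]) auto
  have SSne: "S \<noteq> {}" "finite S" "S \<subseteq> {1..N}" "card S = n" if "S \<in> SS" for S
    using that n unfolding SS_def by (auto intro: finite_subset)
  have Asets: "A S \<in> sets M" if "S \<in> SS" for S
    unfolding A_def using SSne[OF that] K
    by (intro sets.finite_INT) (auto intro!: measurable_sets[OF Zm])
  have sub: "{\<omega>\<in>space M. n \<le> card {i\<in>{1..N}. Y_cont \<beta> K G g i \<omega> < s}} \<subseteq> (\<Union>S\<in>SS. A S)"
  proof
    fix \<omega> assume "\<omega> \<in> {\<omega>\<in>space M. n \<le> card {i\<in>{1..N}. Y_cont \<beta> K G g i \<omega> < s}}"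
    then have \<omega>: "\<omega> \<in> space M" "n \<le> card {i\<in>{1..N}. Y_cont \<beta> K G g i \<omega> < s}" by auto
    obtain S where S: "S \<subseteq> {i\<in>{1..N}. Y_cont \<beta> K G g i \<omega> < s}" "card S = n"
      using obtain_subset_with_card_n[OF \<omega>(2)] by blast
    have "S \<in> SS" using S unfolding SS_def by auto
    moreover have "\<omega> \<in> A S"
      unfolding A_def
    proof (intro INT_I IntI)
      fix j assume j: "j \<in> S \<times> {1..K}"
      then have "Y_cont \<beta> K G g (fst j) \<omega> < s" using S by auto
      then have "\<beta> * (\<Sum>k=1..K. Z (fst j) k \<omega>) < s" unfolding Y_cont_def Z_def .
      moreover have "Z (fst j) (snd j) \<omega> \<le> (\<Sum>k=1..K. Z (fst j) k \<omega>)"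
        using j by (intro member_le_sum) (auto simp: Z_nonneg)
      ultimately have "\<beta> * Z (fst j) (snd j) \<omega> < s" using beta
        by (meson mult_left_mono le_less_trans less_imp_le)
      then have "Z (fst j) (snd j) \<omega> \<le> s / \<beta>" using beta by (simp add: field_simps)
      then show "\<omega> \<in> (\<lambda>j. Z (fst j) (snd j)) j -` {..s / \<beta>}" by simp
    qed (use \<omega> in auto)
    ultimately show "\<omega> \<in> (\<Union>S\<in>SS. A S)" by blast
  qed
  have "measure M {\<omega>\<in>space M. n \<le> card {i\<in>{1..N}. Y_cont \<beta> K G g i \<omega> < s}} \<le> measure M (\<Union>S\<in>SS. A S)"
    using sub Asets finSS by (intro P.finite_measure_mono) auto
  also have "\<dots> \<le> (\<Sum>S\<in>SS. measure M (A S))"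
    using Asets finSS by (intro P.finite_measure_subadditive_finite) auto
  also have "\<dots> \<le> (\<Sum>S\<in>SS. (CZ * (s/\<beta>) powr (2*ms)) ^ (n*K))"
  proof (intro sum_mono)
    fix S assume S: "S \<in> SS"
    have "measure M (A S) = (\<Prod>j\<in>S\<times>{1..K}. measure M ((\<lambda>j. Z (fst j) (snd j)) j -` {..s/\<beta>} \<inter> space M))"
      unfolding A_def using SSne[OF S] K
      by (intro P.indep_varsD[OF indepZ]) auto
    also have "\<dots> \<le> (\<Prod>j\<in>S\<times>{1..K}. CZ * (s/\<beta>) powr (2*ms))"
    proof (intro prod_mono conjI)
      fix j assume j: "j \<in> S \<times> {1..K}"
      have "(\<lambda>j. Z (fst j) (snd j)) j -` {..s/\<beta>} \<inter> space M = {\<omega>\<in>space M. Z (fst j) (snd j) \<omega> \<le> s/\<beta>}" by auto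
      moreover have "measure M {\<omega>\<in>space M. Z (fst j) (snd j) \<omega> \<le> s/\<beta>} \<le> CZ * (s/\<beta>) powr (2*ms)"
        using j SSne[OF S] s beta by (intro Z_upper) auto
      ultimately show "measure M ((\<lambda>j. Z (fst j) (snd j)) j -` {..s/\<beta>} \<inter> space M) \<le> CZ * (s/\<beta>) powr (2*ms)"
        by simp
    qed simp
    also have "\<dots> = (CZ * (s/\<beta>) powr (2*ms)) ^ (n*K)"
      using SSne[OF S] by (simp add: card_cartesian_product)
    finally show "measure M (A S) \<le> (CZ * (s/\<beta>) powr (2*ms)) ^ (n*K)" .
  qed
  also have "\<dots> = real (card SS) * (CZ * (s/\<beta>) powr (2*ms)) ^ (n*K)" by simp
  finally show ?thesis unfolding SS_def .
qed

end


context nsetup begin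

interpretation P: prob_space M by (rule M)

lemma E_sets: "{\<omega>\<in>space M. n \<le> card {i\<in>{1..N}. Y i \<omega> < s}} \<in> sets M"
  if "\<And>i. i \<in> {1..N} \<Longrightarrow> Y i \<in> borel_measurable M" for Y :: "nat \<Rightarrow> 'a \<Rightarrow> real"
  by (rule count_pred_measurable) (use that in auto)

lemma E_lower:
  assumes n: "n \<in> {1..N}" and s: "s > 0" and w: "w = s / (2 * \<beta> * K)" "w \<le> 1"
  shows "measure M {\<omega>\<in>space M. n \<le> card {i\<in>{1..N}. Y_cont \<beta> K G g i \<omega> < s}}
    \<ge> (CL * w powr (2*ms)) ^ (n*K)"
proof -
  have w0: "w \<ge> 0" using w s beta by simp
  define Aset where "Aset = (\<lambda>j::nat\<times>nat\<times>bool. if snd (snd j) then {z::complex. cmod z \<le> uG w} else {z. cmod z \<le> ug w})"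
  define J where "J = {1..n} \<times> {1..K} \<times> (UNIV :: bool set)"
  define B where "B = (\<Inter>j\<in>J. X j -` Aset j \<inter> space M)"
  have JI: "J \<subseteq> {1..N} \<times> {1..K} \<times> UNIV" unfolding J_def using n by auto
  have Jne: "J \<noteq> {}" "finite J" unfolding J_def using n K by auto
  have "measure M B = (\<Prod>j\<in>J. measure M (X j -` Aset j \<inter> space M))"
    unfolding B_def using Jne JI
    by (intro P.indep_varsD[OF indep[folded X_def]]) (auto simp: Aset_def)
  also have "\<dots> = (\<Prod>i\<in>{1..n}. \<Prod>k\<in>{1..K}. \<Prod>c\<in>UNIV. measure M (X (i,k,c) -` Aset (i,k,c) \<inter> space M))"
    unfolding J_def by (simp add: prod.cartesian_product)
  also have "\<dots> = (\<Prod>i\<in>{1..n}. \<Prod>k\<in>{1..K}. measure M {\<omega>\<in>space M. cmod (G i k \<omega>) \<le> uG w} * measure M {\<omega>\<in>space M. cmod (g i k \<omega>) \<le> ug w})"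
    by (intro prod.cong refl) (auto simp: UNIV_bool X_def Aset_def vimage_def Int_def conj_commute intro!: arg_cong2[where f="(*)"] arg_cong[where f="measure M"])
  also have "\<dots> \<ge> (\<Prod>i\<in>{1..n}. \<Prod>k\<in>{1..K}. CL * w powr (2*ms))"
    using n w0 w CL_pos
    by (intro prod_mono conjI prod_nonneg) (auto intro!: pair_lower)
  finally have mB: "measure M B \<ge> (CL * w powr (2*ms)) ^ (n*K)"
    by (simp add: power_mult[symmetric] mult.commute)
  have "B \<subseteq> {\<omega>\<in>space M. n \<le> card {i\<in>{1..N}. Y_cont \<beta> K G g i \<omega> < s}}"
  proof
    fix \<omega> assume \<omega>: "\<omega> \<in> B"
    then have sp: "\<omega> \<in> space M" unfolding B_def using Jne by auto
    have "{1..n} \<subseteq> {i\<in>{1..N}. Y_cont \<beta> K G g i \<omega> < s}"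
    proof
      fix i assume i: "i \<in> {1..n}"
      have Zk: "Z i k \<omega> \<le> w" if k: "k \<in> {1..K}" for k
      proof -
        have "(i,k,True) \<in> J" "(i,k,False) \<in> J" unfolding J_def using i k by auto
        then have "\<omega> \<in> X (i,k,True) -` Aset (i,k,True)" "\<omega> \<in> X (i,k,False) -` Aset (i,k,False)"
          using \<omega> unfolding B_def by blast+
        then have "cmod (G i k \<omega>) \<le> uG w" "cmod (g i k \<omega>) \<le> ug w"
          by (simp_all add: X_def Aset_def)
        then have "Z i k \<omega> \<le> uG w * ug w" unfolding Z_def
          by (intro mult_mono) (auto simp: uG_def ug_def w0)
        then show ?thesis by (simp add: uG_def ug_def split: if_splits)
      qed
      have "(\<Sum>k=1..K. Z i k \<omega>) \<le> (\<Sum>k=1..K. w)" using Zk by (intro sum_mono) auto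
      then have "\<beta> * (\<Sum>k=1..K. Z i k \<omega>) \<le> \<beta> * (K * w)" using beta by (intro mult_left_mono) auto
      also have "\<beta> * (K * w) = s / 2" using w beta K by (simp add: field_simps)
      also have "\<dots> < s" using s by simp
      finally show "i \<in> {i\<in>{1..N}. Y_cont \<beta> K G g i \<omega> < s}"
        using i n unfolding Y_cont_def Z_def by auto
    qed
    then have "card {1..n} \<le> card {i\<in>{1..N}. Y_cont \<beta> K G g i \<omega> < s}"
      by (intro card_mono) auto
    then show "\<omega> \<in> {\<omega>\<in>space M. n \<le> card {i\<in>{1..N}. Y_cont \<beta> K G g i \<omega> < s}}" using sp by simp
  qed
  then have "measure M B \<le> measure M {\<omega>\<in>space M. n \<le> card {i\<in>{1..N}. Y_cont \<beta> K G g i \<omega> < s}}"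
    by (intro P.finite_measure_mono E_sets Y_cont_meas) auto
  with mB show ?thesis by linarith
qed

end


lemma rho_scale:
  assumes "\<rho> > 0" "n \<ge> 1"
  shows "rho_max N alpha R \<rho> n = rho_max N alpha R 1 n / \<rho>"
proof -
  have e: "rho_nl N alpha R \<rho> n l = rho_nl N alpha R 1 n l / \<rho>" for l
    unfolding rho_nl_def by simp
  show ?thesis
  proof (cases "n \<ge> 1")
    case True
    have "mono (\<lambda>x::real. x / \<rho>)" using assms by (intro monoI divide_right_mono) auto
    then have "Max (rho_nl N alpha R 1 n ` {1..n}) / \<rho> = Max ((\<lambda>x. x / \<rho>) ` rho_nl N alpha R 1 n ` {1..n})"
      using True by (intro mono_Max_commute) auto
    then show ?thesis unfolding rho_max_def e image_image by simp
  next
    case False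
    then show ?thesis using assms(2) by simp
  qed
qed

lemma gam_pos: "R l > 0 \<Longrightarrow> gam R l > 0"
  unfolding gam_def by (simp add: powr_gt_zero)

lemma rho_pos:
  assumes N: "N \<ge> 1" and n: "n \<in> {1..N}"
    and alpha_pos: "\<And>i. i \<in> {1..N} \<Longrightarrow> alpha i > 0"
    and R_pos: "\<And>l. l \<in> {1..N} \<Longrightarrow> R l > 0"
    and feas: "\<And>l. l \<in> {1..<N} \<Longrightarrow> alpha l - gam R l * (\<Sum>i=l+1..N. alpha i) > 0"
  shows "rho_max N alpha R 1 n > 0"
proof -
  have "rho_nl N alpha R 1 n 1 > 0"
  proof (cases "1 = N \<and> n = N")
    case True
    then show ?thesis unfolding rho_nl_def using gam_pos[of R N] R_pos[of N] alpha_pos[of N] N by auto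
  next
    case False
    then have "1 < N" using n by auto
    then show ?thesis unfolding rho_nl_def using False gam_pos[of R 1] R_pos[of 1] feas[of 1] by auto
  qed
  also have "rho_nl N alpha R 1 n 1 \<le> rho_max N alpha R 1 n"
    unfolding rho_max_def using n by (intro Max_ge) auto
  finally show ?thesis .
qed

lemma lim_from_log_bounds:
  fixes P :: "real \<Rightarrow> real"
  assumes ev: "eventually (\<lambda>\<rho>. c1 - a * ln \<rho> \<le> ln (P \<rho>) \<and> ln (P \<rho>) \<le> c2 - a * ln \<rho>) at_top"
  shows "((\<lambda>\<rho>. - ln (P \<rho>) / ln \<rho>) \<longlongrightarrow> a) at_top"
proof (rule tendsto_sandwich)
  have lnt: "filterlim (ln :: real \<Rightarrow> real) at_top at_top" by (rule ln_at_top)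
  have "((\<lambda>\<rho>. c2 / ln \<rho>) \<longlongrightarrow> 0) at_top"
    by (rule tendsto_divide_0[OF tendsto_const]) (rule filterlim_at_top_imp_at_infinity[OF lnt])
  then show "((\<lambda>\<rho>. a - c2 / ln \<rho>) \<longlongrightarrow> a) at_top"
    using tendsto_diff[OF tendsto_const[of a]] by fastforce
  have "((\<lambda>\<rho>. c1 / ln \<rho>) \<longlongrightarrow> 0) at_top"
    by (rule tendsto_divide_0[OF tendsto_const]) (rule filterlim_at_top_imp_at_infinity[OF lnt])
  then show "((\<lambda>\<rho>. a - c1 / ln \<rho>) \<longlongrightarrow> a) at_top"
    using tendsto_diff[OF tendsto_const[of a]] by fastforce
  have ev2: "eventually (\<lambda>\<rho>. \<rho> > (1::real)) at_top" by (rule eventually_gt_at_top)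
  show "eventually (\<lambda>\<rho>. a - c2 / ln \<rho> \<le> - ln (P \<rho>) / ln \<rho>) at_top"
    using ev ev2
  proof eventually_elim
    case (elim \<rho>)
    then have l: "ln \<rho> > 0" by simp
    have "a - c2 / ln \<rho> = (a * ln \<rho> - c2) / ln \<rho>" using l by (simp add: field_simps)
    also have "\<dots> \<le> - ln (P \<rho>) / ln \<rho>" using elim l by (intro divide_right_mono) auto
    finally show ?case .
  qed
  show "eventually (\<lambda>\<rho>. - ln (P \<rho>) / ln \<rho> \<le> a - c1 / ln \<rho>) at_top"
    using ev ev2
  proof eventually_elim
    case (elim \<rho>)
    then have l: "ln \<rho> > 0" by simp
    have "- ln (P \<rho>) / ln \<rho> \<le> (a * ln \<rho> - c1) / ln \<rho>" using elim l by (intro divide_right_mono) auto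
    also have "\<dots> = a - c1 / ln \<rho>" using l by (simp add: field_simps)
    finally show ?case .
  qed
qed


context nsetup begin

interpretation P: prob_space M by (rule M)

lemma CZ_pos: "CZ > 0"
  unfolding CZ_def using mG mg mGg
  by (auto intro!: mult_pos_pos divide_pos_pos Gamma_real_pos add_pos_nonneg divide_nonneg_pos)

lemma ln_mono_pos: "0 < x \<Longrightarrow> x \<le> y \<Longrightarrow> ln x \<le> ln (y::real)"
  by simp

lemma main_bounds:
  assumes n: "n \<in> {1..N}" and b: "b \<ge> 2"
  shows "\<exists>A1 A2. \<forall>s>0. s / (2 * \<beta> * K) \<le> 1 \<longrightarrow>
     (A1 + 2*ms*(n*K)*ln s \<le> ln (measure M {\<omega>\<in>space M. n \<le> card {i\<in>{1..N}. Y_cont \<beta> K G g i \<omega> < s}})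
      \<and> ln (measure M {\<omega>\<in>space M. n \<le> card {i\<in>{1..N}. Y_cont \<beta> K G g i \<omega> < s}}) \<le> A2 + 2*ms*(n*K)*ln s
      \<and> A1 + 2*ms*(n*K)*ln s \<le> ln (measure M {\<omega>\<in>space M. n \<le> card {i\<in>{1..N}. Y_disc b \<beta> K tht G g i \<omega> < s}})
      \<and> ln (measure M {\<omega>\<in>space M. n \<le> card {i\<in>{1..N}. Y_disc b \<beta> K tht G g i \<omega> < s}}) \<le> A2 + 2*ms*(n*K)*ln s)"
proof -
  define \<kappa> where "\<kappa> = cos (qstep b / 2)"
  have q0: "qstep b > 0" unfolding qstep_def by simp
  have qle: "qstep b \<le> pi / 2" by (rule qstep_le[OF b])
  have k0: "\<kappa> > 0" unfolding \<kappa>_def using q0 qle by (intro cos_gt_zero) auto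
  have k1: "\<kappa> \<le> 1" unfolding \<kappa>_def by simp
  define SS where "SS = {S. S \<subseteq> {1..N} \<and> card S = n}"
  have cSS: "card SS \<ge> 1"
  proof -
    have "finite SS" unfolding SS_def by (rule finite_subset[of _ "Pow {1..N}"]) auto
    moreover have "{1..n} \<in> SS" unfolding SS_def using n by auto
    ultimately have "card SS \<noteq> 0" by auto
    then show ?thesis by simp
  qed
  define Pc where "Pc = (\<lambda>s. measure M {\<omega>\<in>space M. n \<le> card {i\<in>{1..N}. Y_cont \<beta> K G g i \<omega> < s}})"
  define Pd where "Pd = (\<lambda>s. measure M {\<omega>\<in>space M. n \<le> card {i\<in>{1..N}. Y_disc b \<beta> K tht G g i \<omega> < s}})"
  define A1 where "A1 = real (n*K) * (ln CL - 2*ms*ln (2*\<beta>*K))"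
  define A2 where "A2 = ln (real (card SS)) + real (n*K) * (ln CZ - 2*ms*ln \<beta> - 2*ms*ln \<kappa>)"
  have nK: "n * K \<ge> 1" using n K by simp
  have lnk: "ln \<kappa> \<le> 0" using k0 k1 by simp
  have ms0: "ms > 0" using ms_pos by simp
  have "\<forall>s>0. s / (2 * \<beta> * K) \<le> 1 \<longrightarrow>
     (A1 + 2*ms*(n*K)*ln s \<le> ln (Pc s) \<and> ln (Pc s) \<le> A2 + 2*ms*(n*K)*ln s
      \<and> A1 + 2*ms*(n*K)*ln s \<le> ln (Pd s) \<and> ln (Pd s) \<le> A2 + 2*ms*(n*K)*ln s)"
  proof (intro allI impI)
    fix s :: real assume s: "s > 0" and w: "s / (2 * \<beta> * K) \<le> 1"
    define LB where "LB = (CL * (s / (2 * \<beta> * K)) powr (2*ms)) ^ (n*K)"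
    define UB where "UB = (\<lambda>t. real (card SS) * (CZ * (t/\<beta>) powr (2*ms)) ^ (n*K))"
    have LB0: "LB > 0" unfolding LB_def using CL_pos s beta K by simp
    have Pc_lo: "LB \<le> Pc s" unfolding LB_def Pc_def using E_lower[OF n s refl w] .
    have Pc_up: "Pc t \<le> UB t" if "t > 0" for t unfolding UB_def Pc_def SS_def using E_upper[OF n that] .
    have Ec: "{\<omega>\<in>space M. n \<le> card {i\<in>{1..N}. Y_cont \<beta> K G g i \<omega> < t}} \<in> sets M" for t
      by (intro E_sets Y_cont_meas) auto
    have Ed: "{\<omega>\<in>space M. n \<le> card {i\<in>{1..N}. Y_disc b \<beta> K tht G g i \<omega> < t}} \<in> sets M" for t
      by (intro E_sets Y_disc_meas) auto
    have cd: "Pc s \<le> Pd s" unfolding Pc_def Pd_def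
    proof (intro P.finite_measure_mono Ed subsetI)
      fix \<omega> assume "\<omega> \<in> {\<omega>\<in>space M. n \<le> card {i\<in>{1..N}. Y_cont \<beta> K G g i \<omega> < s}}"
      moreover have "card {i\<in>{1..N}. Y_cont \<beta> K G g i \<omega> < s} \<le> card {i\<in>{1..N}. Y_disc b \<beta> K tht G g i \<omega> < s}"
      proof (intro card_mono_pred)
        fix i assume "Y_cont \<beta> K G g i \<omega> < s"
        then show "Y_disc b \<beta> K tht G g i \<omega> < s" using Y_disc_le_cont[of \<beta> b K tht G g i \<omega>] beta by linarith
      qed auto
      ultimately show "\<omega> \<in> {\<omega>\<in>space M. n \<le> card {i\<in>{1..N}. Y_disc b \<beta> K tht G g i \<omega> < s}}" by auto
    qed
    have dc: "Pd s \<le> Pc (s / \<kappa>)" unfolding Pc_def Pd_def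
    proof (intro P.finite_measure_mono Ec subsetI)
      fix \<omega> assume "\<omega> \<in> {\<omega>\<in>space M. n \<le> card {i\<in>{1..N}. Y_disc b \<beta> K tht G g i \<omega> < s}}"
      moreover have "card {i\<in>{1..N}. Y_disc b \<beta> K tht G g i \<omega> < s} \<le> card {i\<in>{1..N}. Y_cont \<beta> K G g i \<omega> < s / \<kappa>}"
      proof (intro card_mono_pred)
        fix i assume "Y_disc b \<beta> K tht G g i \<omega> < s"
        then have "\<kappa> * Y_cont \<beta> K G g i \<omega> < s"
          using Y_disc_ge_cont[of \<beta> b K G g i \<omega> tht] beta b unfolding \<kappa>_def by linarith
        then show "Y_cont \<beta> K G g i \<omega> < s / \<kappa>" using k0 by (simp add: field_simps)
      qed auto
      ultimately show "\<omega> \<in> {\<omega>\<in>space M. n \<le> card {i\<in>{1..N}. Y_cont \<beta> K G g i \<omega> < s / \<kappa>}}" by auto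
    qed
    have lnLB: "ln LB = A1 + 2*ms*(n*K)*ln s"
      unfolding LB_def A1_def using CL_pos s beta K
      by (simp add: ln_realpow ln_mult ln_div algebra_simps)
    have lnUB: "ln (UB t) = ln (real (card SS)) + real (n*K) * (ln CZ + 2*ms*(ln t - ln \<beta>))" if "t > 0" for t
      unfolding UB_def using CZ_pos that beta cSS
      by (simp add: ln_realpow ln_mult ln_div algebra_simps)
    have UB0: "UB t > 0" if "t > 0" for t unfolding UB_def using CZ_pos that beta cSS by simp
    have "real K * (real n * (ln \<kappa> * ms)) \<le> 0"
      using lnk ms0 by (intro mult_nonneg_nonpos mult_nonpos_nonneg) auto
    then have "ln (UB s) \<le> A2 + 2*ms*(n*K)*ln s"
      unfolding lnUB[OF s] A2_def using lnk ms0 nK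
      by (simp add: algebra_simps)
    moreover have "ln (UB (s/\<kappa>)) \<le> A2 + 2*ms*(n*K)*ln s"
    proof -
      have sk: "s / \<kappa> > 0" using s k0 by simp
      show ?thesis using s k0 unfolding lnUB[OF sk] A2_def by (simp add: ln_div algebra_simps)
    qed
    moreover have "ln LB \<le> ln (Pc s)" using LB0 Pc_lo by simp
    moreover have "ln LB \<le> ln (Pd s)" using LB0 Pc_lo cd by simp
    moreover have "ln (Pc s) \<le> ln (UB s)" using LB0 Pc_lo Pc_up[OF s] by simp
    moreover have "ln (Pd s) \<le> ln (UB (s/\<kappa>))"
      using LB0 Pc_lo cd dc Pc_up[of "s/\<kappa>"] s k0 by simp
    ultimately show "A1 + 2*ms*(n*K)*ln s \<le> ln (Pc s) \<and> ln (Pc s) \<le> A2 + 2*ms*(n*K)*ln s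
      \<and> A1 + 2*ms*(n*K)*ln s \<le> ln (Pd s) \<and> ln (Pd s) \<le> A2 + 2*ms*(n*K)*ln s"
      unfolding lnLB by linarith
  qed
  then show ?thesis unfolding Pc_def Pd_def by blast
qed

end


theorem corollary1:
  fixes M :: "'a measure"
    and N K b :: nat and \<beta> mG mg :: real
    and G g :: "nat \<Rightarrow> nat \<Rightarrow> 'a \<Rightarrow> complex"
    and tht :: "nat \<Rightarrow> real"
    and alpha R :: "nat \<Rightarrow> real"
    and n :: nat
  assumes M: "prob_space M"
    and N: "N \<ge> 1" and K: "K \<ge> 1" and b: "b \<ge> 2"
    and beta: "0 < \<beta>" "\<beta> \<le> 1"
    and mG: "mG \<ge> 1/2" and mg: "mg \<ge> 1/2" and mGg: "mG \<noteq> mg"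
    and indep: "prob_space.indep_vars M (\<lambda>_. borel)
                  (\<lambda>(i, k, c). if c then G i k else g i k) ({1..N} \<times> {1..K} \<times> UNIV)"
    and distG: "\<And>i k. i \<in> {1..N} \<Longrightarrow> k \<in> {1..K} \<Longrightarrow>
                  distributed M lborel (\<lambda>\<omega>. cmod (G i k \<omega>)) (\<lambda>x. ennreal (nakagami_pdf mG x))"
    and distg: "\<And>i k. i \<in> {1..N} \<Longrightarrow> k \<in> {1..K} \<Longrightarrow>
                  distributed M lborel (\<lambda>\<omega>. cmod (g i k \<omega>)) (\<lambda>x. ennreal (nakagami_pdf mg x))"
    and tht: "\<And>i. i \<in> {1..N} \<Longrightarrow> 0 \<le> tht i \<and> tht i < 2 * pi"
    and alpha_pos: "\<And>i. i \<in> {1..N} \<Longrightarrow> alpha i > 0"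
    and alpha_dec: "\<And>i. i \<in> {1..<N} \<Longrightarrow> alpha i > alpha (i + 1)"
    and alpha_sum: "(\<Sum>i=1..N. alpha i) = 1"
    and R_pos: "\<And>l. l \<in> {1..N} \<Longrightarrow> R l > 0"
    and feas: "\<And>l. l \<in> {1..<N} \<Longrightarrow> alpha l - gam R l * (\<Sum>i=l+1..N. alpha i) > 0"
    and n: "n \<in> {1..N}"
  shows "((\<lambda>\<rho>. - ln (outage M N (Y_disc b \<beta> K tht G g) (rho_max N alpha R \<rho> n) n) / ln \<rho>)
            \<longlongrightarrow> real n * min mG mg * real K) at_top
       \<and> ((\<lambda>\<rho>. - ln (outage M N (Y_cont \<beta> K G g) (rho_max N alpha R \<rho> n) n) / ln \<rho>)
            \<longlongrightarrow> real n * min mG mg * real K) at_top"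
proof -
  interpret S: nsetup M N K \<beta> mG mg G g
    unfolding nsetup_def using M N K beta mG mg mGg indep distG distg by blast
  interpret P: prob_space M by (rule M)
  obtain A1 A2 where AB: "\<forall>s>0. s / (2 * \<beta> * K) \<le> 1 \<longrightarrow>
     (A1 + 2*S.ms*(n*K)*ln s \<le> ln (measure M {\<omega>\<in>space M. n \<le> card {i\<in>{1..N}. Y_cont \<beta> K G g i \<omega> < s}})
      \<and> ln (measure M {\<omega>\<in>space M. n \<le> card {i\<in>{1..N}. Y_cont \<beta> K G g i \<omega> < s}}) \<le> A2 + 2*S.ms*(n*K)*ln s
      \<and> A1 + 2*S.ms*(n*K)*ln s \<le> ln (measure M {\<omega>\<in>space M. n \<le> card {i\<in>{1..N}. Y_disc b \<beta> K tht G g i \<omega> < s}})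
      \<and> ln (measure M {\<omega>\<in>space M. n \<le> card {i\<in>{1..N}. Y_disc b \<beta> K tht G g i \<omega> < s}}) \<le> A2 + 2*S.ms*(n*K)*ln s)"
    using S.main_bounds[OF n b, of tht] by blast
  define c0 where "c0 = rho_max N alpha R 1 n"
  have c0: "c0 > 0" unfolding c0_def using rho_pos[OF N n alpha_pos R_pos feas] by blast
  have n1: "n \<ge> 1" using n by simp
  define a where "a = real n * min mG mg * real K"
  have a: "a = S.ms * (n*K)" unfolding a_def S.ms_def by simp
  define c1 where "c1 = A1 + S.ms * (n*K) * ln c0"
  define c2 where "c2 = A2 + S.ms * (n*K) * ln c0"
  have ev: "eventually (\<lambda>\<rho>. \<rho> \<ge> max 1 (c0 / (2*\<beta>*K)\<^sup>2)) at_top" by (rule eventually_ge_at_top)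
  have key: "c1 - a * ln \<rho> \<le> ln (outage M N Y (rho_max N alpha R \<rho> n) n) \<and> ln (outage M N Y (rho_max N alpha R \<rho> n) n) \<le> c2 - a * ln \<rho>"
    if \<rho>: "\<rho> \<ge> max 1 (c0 / (2*\<beta>*K)\<^sup>2)"
      and Y: "Y = Y_cont \<beta> K G g \<or> Y = Y_disc b \<beta> K tht G g" for \<rho> Y
  proof -
    have \<rho>0: "\<rho> > 0" using \<rho> by simp
    have T: "rho_max N alpha R \<rho> n = c0 / \<rho>" unfolding c0_def by (rule rho_scale[OF \<rho>0 n1])
    define s where "s = sqrt (c0 / \<rho>)"
    have s0: "s > 0" unfolding s_def using c0 \<rho>0 by simp
    have "c0 / \<rho> \<le> (2*\<beta>*K)\<^sup>2" using \<rho> \<rho>0 beta K by (simp add: divide_le_eq mult.commute)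
    then have "sqrt (c0 / \<rho>) \<le> sqrt ((2*\<beta>*K)\<^sup>2)" by (rule real_sqrt_le_mono)
    then have "s \<le> 2*\<beta>*K" unfolding s_def using beta by simp
    then have w: "s / (2 * \<beta> * K) \<le> 1" using beta K by simp
    have lns: "2 * ln s = ln c0 - ln \<rho>" unfolding s_def using c0 \<rho>0 by (simp add: ln_sqrt ln_div)
    have nnY: "\<And>i \<omega>. Y i \<omega> \<ge> 0"
    proof -
      fix i \<omega>
      show "Y i \<omega> \<ge> 0" using Y Y_cont_nonneg[of \<beta> K G g i \<omega>] Y_disc_nonneg[of \<beta> b K tht G g i \<omega>] beta by auto
    qed
    have out: "outage M N Y (rho_max N alpha R \<rho> n) n = measure M {\<omega>\<in>space M. n \<le> card {i\<in>{1..N}. Y i \<omega> < s}}"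
      unfolding outage_def T s_def using c0 \<rho>0
      by (intro arg_cong[where f="measure M"] Collect_cong conj_cong refl ord_stat_sq_less_iff[OF n]) (auto intro: nnY)
    have AB': "A1 + 2*S.ms*(n*K)*ln s \<le> ln (outage M N Y (rho_max N alpha R \<rho> n) n)
       \<and> ln (outage M N Y (rho_max N alpha R \<rho> n) n) \<le> A2 + 2*S.ms*(n*K)*ln s"
      using AB s0 w Y unfolding out by auto
    have "2*S.ms*(n*K)*ln s = S.ms * (n*K) * (2 * ln s)" by simp
    also have "\<dots> = S.ms * (n*K) * ln c0 - a * ln \<rho>" unfolding lns a by (simp add: algebra_simps)
    finally show ?thesis using AB' unfolding c1_def c2_def by linarith
  qed
  show ?thesis
  proof
    show "((\<lambda>\<rho>. - ln (outage M N (Y_disc b \<beta> K tht G g) (rho_max N alpha R \<rho> n) n) / ln \<rho>)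
            \<longlongrightarrow> real n * min mG mg * real K) at_top"
      unfolding a_def[symmetric] using ev
      by (intro lim_from_log_bounds[of c1 a _ c2]) (auto elim!: eventually_mono intro!: key)
    show "((\<lambda>\<rho>. - ln (outage M N (Y_cont \<beta> K G g) (rho_max N alpha R \<rho> n) n) / ln \<rho>)
            \<longlongrightarrow> real n * min mG mg * real K) at_top"
      unfolding a_def[symmetric] using ev
      by (intro lim_from_log_bounds[of c1 a _ c2]) (auto elim!: eventually_mono intro!: key)
  qed
qed


end
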